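(* Let $G$ be a group with identity $e$, $A$ a finite set with $|A|\ge2$, $S\subseteq G$ finite with $e\in S$. Suppose $(\mathcal P,f)$ generates a local map $\mu:A^S\to A$ and $|\mathcal P|$ is not a multiple of $|A|$. Then every $s\in S\setminus\{e\}$ is essential for $\mu$.
   Context: $A^S$ is the set of functions $S\to A$. For $s\in S$, $\mathrm{Res}_s(z)=z|_{S\setminus\{s\}}$. An element $s\in S$ is essential for $\mu$ if there exist $z,w\in A^S$ with $\mathrm{Res}_s(z)=\mathrm{Res}_s(w)$ but $\mu(z)\neq\mu(w)$. The pair $(\mathcal P,f)$ generates $\mu$ if $\mathcal P=\{z\in A^S:\mu(z)\neq z(e)\}$ and $f:\mathcal P\to A$ is the restriction of $\mu$ to $\mathcal P$. *)

theory Defs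
  imports "HOL-Algebra.Group" "HOL-Library.FuncSet"
begin

text \<open>Configurations in A^S are represented as extensional functions on S
  with values in A, i.e. elements of PiE S (%_. A).\<close>

definition Res :: "'g set \<Rightarrow> 'g \<Rightarrow> ('g \<Rightarrow> 'a) \<Rightarrow> ('g \<Rightarrow> 'a)" where
  "Res S s z = restrict z (S - {s})"

definition essential :: "'a set \<Rightarrow> 'g set \<Rightarrow> (('g \<Rightarrow> 'a) \<Rightarrow> 'a) \<Rightarrow> 'g \<Rightarrow> bool" where
  "essential A S \<mu> s \<longleftrightarrow>
     (\<exists>z \<in> S \<rightarrow>\<^sub>E A. \<exists>w \<in> S \<rightarrow>\<^sub>E A. Res S s z = Res S s w \<and> \<mu> z \<noteq> \<mu> w)"

definition generates ::
  "'a set \<Rightarrow> 'g set \<Rightarrow> 'g \<Rightarrow> ('g \<Rightarrow> 'a) set \<Rightarrow> (('g \<Rightarrow> 'a) \<Rightarrow> 'a)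
     \<Rightarrow> (('g \<Rightarrow> 'a) \<Rightarrow> 'a) \<Rightarrow> bool" where
  "generates A S e P f \<mu> \<longleftrightarrow>
     P = {z \<in> S \<rightarrow>\<^sub>E A. \<mu> z \<noteq> z e} \<and> (\<forall>z \<in> P. f z = \<mu> z)"

end

theory Submission
  imports Defs
begin

theorem mainTheorem3:
  fixes G :: "('g, 'b) monoid_scheme"
    and A :: "'a set" and S :: "'g set"
    and P :: "('g \<Rightarrow> 'a) set" and f \<mu> :: "('g \<Rightarrow> 'a) \<Rightarrow> 'a"
    and s :: 'g
  assumes "group G"
    and "finite A" and "card A \<ge> 2"
    and "finite S" and "S \<subseteq> carrier G" and "\<one>\<^bsub>G\<^esub> \<in> S"
    and "\<mu> \<in> (S \<rightarrow>\<^sub>E A) \<rightarrow> A"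
    and "generates A S \<one>\<^bsub>G\<^esub> P f \<mu>"
    and "\<not> (card A dvd card P)"
    and "s \<in> S - {\<one>\<^bsub>G\<^esub>}"
  shows "essential A S \<mu> s"
proof (rule ccontr)
  let ?e = "\<one>\<^bsub>G\<^esub>"
  assume ne: "\<not> essential A S \<mu> s"
  hence NE: "\<And>z w. z \<in> S \<rightarrow>\<^sub>E A \<Longrightarrow> w \<in> S \<rightarrow>\<^sub>E A \<Longrightarrow> Res S s z = Res S s w \<Longrightarrow> \<mu> z = \<mu> w"
    unfolding essential_def by blast
  have Pdef: "P = {z \<in> S \<rightarrow>\<^sub>E A. \<mu> z \<noteq> z ?e}" using assms(8) unfolding generates_def by blast
  have sS: "s \<in> S" and se: "s \<noteq> ?e" using assms(10) by auto
  define g where "g = (\<lambda>z::'g \<Rightarrow> 'a. (Res S s z, z s))"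
  define Q where "Q = (Res S s ` P :: ('g \<Rightarrow> 'a) set)"
  have inj: "inj_on g P"
  proof (rule inj_onI)
    fix z w assume z: "z \<in> P" and w: "w \<in> P" and eq: "g z = g w"
    have zP: "z \<in> S \<rightarrow>\<^sub>E A" and wP: "w \<in> S \<rightarrow>\<^sub>E A" using z w Pdef by auto
    have r: "restrict z (S - {s}) = restrict w (S - {s})" and zs: "z s = w s"
      using eq unfolding g_def Res_def by auto
    show "z = w"
    proof
      fix x
      show "z x = w x"
      proof (cases "x \<in> S")
        case True
        show ?thesis
        proof (cases "x = s")
          case True then show ?thesis using zs by simp
        next
          case False
          then have "restrict z (S - {s}) x = restrict w (S - {s}) x" using r by simp
          then show ?thesis using False \<open>x \<in> S\<close> by simp
        qed
      next
        case False
        then show ?thesis using zP wP by (simp add: PiE_def extensional_def)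
      qed
    qed
  qed
  have img: "g ` P = Q \<times> A"
  proof
    show "g ` P \<subseteq> Q \<times> A"
      using sS unfolding g_def Q_def Pdef by (auto simp: PiE_def Pi_def)
  next
    show "Q \<times> A \<subseteq> g ` P"
    proof
      fix p assume "p \<in> Q \<times> A"
      then obtain q a where p: "p = (q, a)" and q: "q \<in> Q" and a: "a \<in> A" by auto
      then obtain z where z: "z \<in> P" and qz: "q = Res S s z" unfolding Q_def by auto
      have zP: "z \<in> S \<rightarrow>\<^sub>E A" and mz: "\<mu> z \<noteq> z ?e" using z Pdef by auto
      define w where "w = z(s := a)"
      have wP: "w \<in> S \<rightarrow>\<^sub>E A" using zP a sS unfolding w_def by (auto simp: PiE_def Pi_def extensional_def)
      have rw: "Res S s w = Res S s z" unfolding w_def Res_def by (auto simp: restrict_def)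
      have "\<mu> w = \<mu> z" using NE[OF wP zP rw] .
      moreover have "w ?e = z ?e" using se unfolding w_def by simp
      ultimately have "w \<in> P" using wP mz Pdef by auto
      moreover have "g w = p" using rw qz p unfolding g_def w_def by simp
      ultimately show "p \<in> g ` P" by blast
    qed
  qed
  have "card P = card (Q \<times> A)" using card_image[OF inj] img by simp
  also have "\<dots> = card Q * card A" by (simp add: card_cartesian_product)
  finally have "card A dvd card P" by simp
  with assms(9) show False by simp
qed

end
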